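(* Let $n\in\mathbb{N}$, $a,b\in\mathbb{C}$ with $b\notin\mathbb{Z}^-$, and let $c\in\mathbb{C}$. (i) If $c\neq0$, then \[ \frac{1}{n+b+1}\sum_{j=0}^{n}\sum_{i=0}^{j}\frac{\binom{n+a+1}{i}}{\binom{n+b}{j}}\,c^{i-j} =\frac{1}{b+1}\sum_{k=0}^{n}\sum_{j=0}^{k}\frac{\binom{k+a}{j}}{\binom{k+b+1}{k}}\,c^{j-k}. \] (ii) If $|c+1|>1$, $a-b\notin\{0,-1,-2,\dots\}$ and $a\notin\mathbb{Z}^-$, then \[ \frac{(a-b)(c+1)}{(n+b+1)c}\sum_{j=0}^{n}\sum_{i=0}^{j}\frac{\binom{n+a+1}{i}}{\binom{n+b}{j}}\,c^{i-j} =\frac{(a+1)_{n+1}}{(b+1)_{n+1}}\;{}_3F_2\!\left(1,a-b,n+a+2;\,a-b+1,a+1;\,\tfrac{1}{c+1}\right)-{}_2F_1\!\left(1,a-b;\,a-b+1;\,\tfrac{1}{c+1}\right). \] (iii) If $|c+1|>1$ and $a=b-m$ with $m\in\mathbb{N}$, then \[ \frac{(c+1)^{b-a+1}}{(n+b+1)c}\sum_{j=0}^{n}\sum_{i=0}^{j}\frac{\binom{n+a+1}{i}}{\binom{n+b}{j}}\,c^{i-j} =\frac{n+b+2}{(b+1)(c+1)}\,{}_3F_2\!\left(1,1,n+b+3;\,2,b+2;\,\tfrac{1}{c+1}\right)+\psi(n+b+2)-\psi(b+1)+\log\frac{c}{c+1}-\sum_{\ell=1}^{b-a}\frac{(c+1)^{\ell}}{\ell}\left(\frac{(b+1-\ell)_{n+1}}{(b+1)_{n+1}}-1\right).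 \]
   Context: For $x\in\mathbb{C}$, $i\in\mathbb{N}$: $\binom{x}{i}=x(x-1)\cdots(x-i+1)/i!$. $\mathbb{Z}^-=\{-1,-2,\dots\}$. Pochhammer symbol: $(\alpha)_0=1$, $(\alpha)_k=\alpha(\alpha+1)\cdots(\alpha+k-1)$. Hypergeometric functions: ${}_2F_1(a,b;c;z)=\sum_{k\ge0}\frac{(a)_k(b)_k}{(c)_k}\frac{z^k}{k!}$ and ${}_3F_2(a,b,c;d,e;z)=\sum_{k\ge0}\frac{(a)_k(b)_k(c)_k}{(d)_k(e)_k}\frac{z^k}{k!}$, convergent for $|z|<1$. $\psi=\Gamma'/\Gamma$ is the digamma function (so $\psi(n+b+2)-\psi(b+1)=\sum_{k=1}^{n+1}\frac{1}{b+k}$), and $\log$ is the principal branch. (The paper asserts (ii),(iii) for all $c\notin\{-1,0\}$ with the hypergeometric functions understood by analytic continuation; here they are stated in the region $|c+1|>1$ where the series converge.) *)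

theory Defs
  imports "HOL-Analysis.Analysis"
begin

text \<open>Gauss hypergeometric series 2F1(a,b;c;z) (as a formal series sum; used only for |z|<1).\<close>
definition hyp2F1 :: "complex \<Rightarrow> complex \<Rightarrow> complex \<Rightarrow> complex \<Rightarrow> complex" where
  "hyp2F1 a b c z = (\<Sum>k. pochhammer a k * pochhammer b k / pochhammer c k * z ^ k / fact k)"

definition hyp3F2 :: "complex \<Rightarrow> complex \<Rightarrow> complex \<Rightarrow> complex \<Rightarrow> complex \<Rightarrow> complex \<Rightarrow> complex" where
  "hyp3F2 a b c d e z =
     (\<Sum>k. pochhammer a k * pochhammer b k * pochhammer c k / (pochhammer d k * pochhammer e k) * z ^ k / fact k)"

definition dsum :: "nat \<Rightarrow> complex \<Rightarrow> complex \<Rightarrow> complex \<Rightarrow> complex" where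
  "dsum n a b c = (\<Sum>j=0..n. \<Sum>i=0..j.
      ((of_nat n + a + 1) gchoose i) / ((of_nat n + b) gchoose j) * c powi (int i - int j))"

end

theory Submission
  imports Defs "HOL-Computational_Algebra.Formal_Power_Series" "HOL-Computational_Algebra.Polynomial"
begin


lemma negbin_sums:
  fixes z :: complex assumes "norm z < 1"
  shows "(\<lambda>k. of_nat ((s + k) choose k) * z^k) sums inverse ((1 - z)^(Suc s))"
proof -
  have n: "norm (-z) < 1" using assms by simp
  have A: "(\<lambda>k. (-1)^k * ((of_nat (Suc s) + of_nat k - 1) gchoose k) * (-z)^k) sums (1 + - z) powr (- of_nat (Suc s))"
    by (rule one_plus_neg_powr_powser[OF n])
  have B: "(-1::complex)^k * ((of_nat (Suc s) + of_nat k - 1) gchoose k) * (-z)^k = of_nat ((s + k) choose k) * z^k" for k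
  proof -
    have e1: "(of_nat (Suc s) + of_nat k - 1 :: complex) = of_nat (s+k)" by simp
    have e2: "(of_nat (s+k) gchoose k :: complex) = of_nat ((s+k) choose k)" by (rule binomial_gbinomial[symmetric])
    have e3: "(-1::complex)^k * (-z)^k = z^k"
    proof -
      have "(-1::complex)^k * (-z)^k = ((-1)*(-z))^k" by (rule power_mult_distrib[symmetric])
      then show ?thesis by simp
    qed
    have "(-1::complex)^k * ((of_nat (Suc s) + of_nat k - 1) gchoose k) * (-z)^k
        = ((-1::complex)^k * (-z)^k) * (of_nat (s+k) gchoose k)" unfolding e1 by (simp only: mult_ac)
    then show ?thesis unfolding e3 e2 by (simp only: mult_ac)
  qed
  have C: "(1 + - z) powr (- of_nat (Suc s)) = inverse ((1 - z)^(Suc s))"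
  proof -
    have "1 - z \<noteq> 0" using assms by auto
    then have "(1 - z) powr (of_nat (Suc s)) = (1 - z)^(Suc s)" using powr_nat'[of "1-z" "Suc s"] by blast
    then show ?thesis using powr_minus[of "1-z" "of_nat (Suc s)"] by (simp only: diff_conv_add_uminus)
  qed
  from A show ?thesis unfolding B C .
qed

lemma binpow_sums:
  fixes z :: complex assumes "norm z < 1"
  shows "(\<lambda>k. of_nat (k choose s) * z^k) sums (z^s / (1 - z)^(Suc s))"
proof -
  have A: "(\<lambda>k. z^s * (of_nat ((s + k) choose k) * z^k)) sums (z^s * inverse ((1 - z)^(Suc s)))"
    by (rule sums_mult[OF negbin_sums[OF assms]])
  have B: "z^s * (of_nat ((s + k) choose k) * z^k) = of_nat ((k + s) choose s) * z^(k+s)" for k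
  proof -
    have "(k+s) choose k = (k+s) choose s" using binomial_symmetric[of k "k+s"] by simp
    then show ?thesis by (simp add: power_add add.commute mult_ac)
  qed
  from A have "(\<lambda>k. of_nat ((k + s) choose s) * z^(k+s)) sums (z^s / (1 - z)^(Suc s))"
    unfolding B by (simp add: divide_inverse)
  then show ?thesis
    by (subst (asm) sums_zero_iff_shift[where f="\<lambda>k. of_nat (k choose s) * z^k"]) auto
qed
lemma neg_shift: "(b::complex) + of_nat j = - of_nat k \<Longrightarrow> b = - of_nat (j + k)"
proof -
  assume h: "b + of_nat j = - of_nat k"
  have "b = (b + of_nat j) - of_nat j" by simp
  also have "\<dots> = - of_nat k - of_nat j" using h by simp
  also have "\<dots> = - of_nat (j + k)" by simp
  finally show ?thesis .
qed

lemma alg_tel: fixes P X B x b :: complex assumes "P \<noteq> 0" "B \<noteq> 0"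
  shows "X/P - 1 + (x-b)*(X/(B*P)) = ((x - b + B)*X)/(B*P) - 1"
  using assms by (simp add: field_simps)

lemma alg_K: fixes P1 P2 M B X f y :: complex
  assumes "P1 \<noteq> 0" "P2 \<noteq> 0" "B \<noteq> 0" "f \<noteq> 0" "B * P2 = P1 * M"
  shows "M*(1 - X/P2) + (B - y)*((X/f)/(P1/f)) = M*(1 - (y*X)/(B*P2))"
proof -
  have M: "M = B * P2 / P1" using assms by (simp add: field_simps)
  show ?thesis unfolding M using assms(1-4) by (simp add: field_simps)
qed

lemma poch_nz1:
  fixes b :: complex
  assumes "\<forall>k::nat. b \<noteq> - of_nat (Suc k)"
  shows "pochhammer (b + 1) m \<noteq> 0"
proof
  assume "pochhammer (b + 1) m = 0"
  then obtain k where "b + 1 = - of_nat k" by (auto simp: pochhammer_eq_0_iff)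
  then have "b = - of_nat (Suc k)" using neg_shift[of b 1 k] by simp
  with assms show False by blast
qed

lemma b_nz: fixes b :: complex assumes "\<forall>k::nat. b \<noteq> - of_nat (Suc k)"
  shows "b + of_nat (Suc m) \<noteq> 0"
proof
  assume "b + of_nat (Suc m) = 0"
  then have "b = - of_nat (Suc m)" using neg_shift[of b "Suc m" 0] by simp
  with assms show False by blast
qed

lemma hyp_shift: fixes b :: complex assumes "\<forall>k::nat. b \<noteq> - of_nat (Suc k)"
  shows "\<forall>k::nat. b + 1 \<noteq> - of_nat (Suc k)"
proof
  fix k :: nat
  show "b + 1 \<noteq> - of_nat (Suc k)"
  proof
    assume "b + 1 = - of_nat (Suc k)"
    then have "b = - of_nat (Suc (Suc k))" using neg_shift[of b 1 "Suc k"] by simp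
    with assms show False by blast
  qed
qed

definition Phi :: "nat \<Rightarrow> complex \<Rightarrow> complex \<Rightarrow> complex" where
  "Phi n b x = (\<Sum>r=0..n. pochhammer (x + 1) r / pochhammer (b + 1) (Suc r))"

lemma Phi_tel:
  assumes "\<forall>k::nat. b \<noteq> - of_nat (Suc k)"
  shows "(x - b) * Phi n b x = pochhammer (x + 1) (Suc n) / pochhammer (b + 1) (Suc n) - 1"
proof (induction n)
  case 0
  have "b + 1 \<noteq> 0" using b_nz[OF assms, of 0] by simp
  then show ?case by (simp add: Phi_def field_simps)
next
  case (Suc n)
  have P: "pochhammer (b + 1) (Suc n) \<noteq> 0" by (rule poch_nz1[OF assms])
  have Q: "b + 1 + of_nat (Suc n) \<noteq> 0" using b_nz[OF assms, of "Suc n"] by (simp add: algebra_simps)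
  have e1: "pochhammer (b + 1) (Suc (Suc n)) = (b + 1 + of_nat (Suc n)) * pochhammer (b + 1) (Suc n)"
    by (rule pochhammer_rec')
  have e2: "pochhammer (x + 1) (Suc (Suc n)) = (x + 1 + of_nat (Suc n)) * pochhammer (x + 1) (Suc n)"
    by (rule pochhammer_rec')
  have "(x - b) * Phi (Suc n) b x = (x - b) * Phi n b x + (x - b) * (pochhammer (x + 1) (Suc n) / pochhammer (b + 1) (Suc (Suc n)))"
    by (simp add: Phi_def algebra_simps)
  also have "\<dots> = pochhammer (x + 1) (Suc (Suc n)) / pochhammer (b + 1) (Suc (Suc n)) - 1"
    unfolding Suc.IH e1 e2 alg_tel[OF P Q] by (simp add: algebra_simps)
  finally show ?case .
qed

lemma K_lemma:
  fixes b x :: complex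
  assumes "\<forall>k::nat. b \<noteq> - of_nat (Suc k)"
  shows "(b - x) * (\<Sum>j=0..n. ((x + of_nat n + 1) gchoose j) / ((of_nat n + b) gchoose j))
      = (of_nat n + b + 1) * (1 - pochhammer (x + 1) (Suc n) / pochhammer (b + 1) (Suc n))"
  using assms
proof (induction n arbitrary: x b)
  case 0
  have "b + 1 \<noteq> 0" using b_nz[OF 0, of 0] by simp
  then show ?case by (simp add: field_simps)
next
  case (Suc n)
  note hb = Suc.prems
  have IH: "((b+1) - (x+1)) * (\<Sum>j=0..n. (((x+1) + of_nat n + 1) gchoose j) / ((of_nat n + (b+1)) gchoose j))
      = (of_nat n + (b+1) + 1) * (1 - pochhammer ((x+1) + 1) (Suc n) / pochhammer ((b+1) + 1) (Suc n))"
    by (rule Suc.IH[OF hyp_shift[OF hb]])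
  have s: "(\<Sum>j=0..Suc n. ((x + of_nat (Suc n) + 1) gchoose j) / ((of_nat (Suc n) + b) gchoose j))
     = (\<Sum>j=0..n. (((x+1) + of_nat n + 1) gchoose j) / ((of_nat n + (b+1)) gchoose j))
       + ((x + of_nat (Suc n) + 1) gchoose (Suc n)) / ((of_nat (Suc n) + b) gchoose (Suc n))"
    by (simp add: algebra_simps)
  have g1: "(x + of_nat (Suc n) + 1) gchoose (Suc n) = pochhammer (x + 2) (Suc n) / fact (Suc n)"
    by (simp add: gbinomial_pochhammer' algebra_simps)
  have g2: "(of_nat (Suc n) + b) gchoose (Suc n) = pochhammer (b + 1) (Suc n) / fact (Suc n)"
    by (simp add: gbinomial_pochhammer' algebra_simps)
  define P1 where "P1 = pochhammer (b + 1) (Suc n)"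
  define P2 where "P2 = pochhammer (b + 2) (Suc n)"
  define X2 where "X2 = pochhammer (x + 2) (Suc n)"
  have P1nz: "P1 \<noteq> 0" unfolding P1_def by (rule poch_nz1[OF hb])
  have P2nz: "P2 \<noteq> 0" unfolding P2_def using poch_nz1[OF hyp_shift[OF hb], of "Suc n"] by (simp add: add.assoc)
  have b1: "b + 1 \<noteq> 0" using b_nz[OF hb, of 0] by simp
  have b2: "of_nat n + b + 2 \<noteq> 0" using b_nz[OF hb, of "Suc n"] by (simp add: algebra_simps)
  have r1: "(b + 1) * P2 = P1 * (b + 1 + of_nat (Suc n))"
    unfolding P1_def P2_def using pochhammer_rec[of "b+1" "Suc n"] pochhammer_rec'[of "b+1" "Suc n"]
    by (simp add: algebra_simps numeral_2_eq_2)
  have r2: "pochhammer (b + 1) (Suc (Suc n)) = (b + 1) * P2"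
    unfolding P2_def using pochhammer_rec[of "b+1" "Suc n"] by (simp add: algebra_simps numeral_2_eq_2)
  have r3: "pochhammer (x + 1) (Suc (Suc n)) = (x + 1) * X2"
    unfolding X2_def using pochhammer_rec[of "x+1" "Suc n"] by (simp add: algebra_simps numeral_2_eq_2)
  have IH': "(b - x) * (\<Sum>j=0..n. (((x+1) + of_nat n + 1) gchoose j) / ((of_nat n + (b+1)) gchoose j))
      = (of_nat n + b + 2) * (1 - X2 / P2)"
    using IH unfolding X2_def P2_def by (simp add: algebra_simps numeral_2_eq_2)
  have fn: "fact (Suc n) \<noteq> (0::complex)" by (rule fact_nonzero)
  have "(of_nat (Suc n) + b + 1) * (1 - pochhammer (x + 1) (Suc (Suc n)) / pochhammer (b + 1) (Suc (Suc n)))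
     = (of_nat n + b + 2) * (1 - ((x+1) * X2) / ((b+1) * P2))" unfolding r2 r3 by (simp add: algebra_simps)
  also have "\<dots> = (of_nat n + b + 2)*(1 - X2/P2) + ((b+1) - (x+1))*((X2/fact (Suc n))/(P1/fact (Suc n)))"
    by (rule alg_K[symmetric, OF P1nz P2nz b1 fn]) (use r1 in \<open>simp add: algebra_simps\<close>)
  finally show ?case
    unfolding s distrib_left IH' g1 g2 X2_def[symmetric] P1_def[symmetric] by (simp add: algebra_simps)
qed




lemma poch_nzt:
  fixes b :: complex
  assumes "\<forall>k::nat. b \<noteq> - of_nat (Suc k)"
  shows "pochhammer (b + 1 + of_nat t) m \<noteq> 0"
proof
  assume "pochhammer (b + 1 + of_nat t) m = 0"
  then obtain k where "b + 1 + of_nat t = - of_nat k" by (auto simp: pochhammer_eq_0_iff)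
  then have "b + of_nat (Suc t) = - of_nat k" by (simp add: algebra_simps)
  then have "b = - of_nat (Suc (t + k))" using neg_shift[of b "Suc t" k] by simp
  with assms show False by blast
qed

lemma S_lemma:
  fixes b x :: complex
  assumes hb: "\<forall>k::nat. b \<noteq> - of_nat (Suc k)"
  shows "(\<Sum>j=0..n. ((x + of_nat n + 1) gchoose j) / ((of_nat n + b) gchoose j)) = (of_nat n + b + 1) * Phi n b x"
proof (cases "x = b")
  case False
  have K: "(b - x) * (\<Sum>j=0..n. ((x + of_nat n + 1) gchoose j) / ((of_nat n + b) gchoose j))
      = (of_nat n + b + 1) * (1 - pochhammer (x + 1) (Suc n) / pochhammer (b + 1) (Suc n))"
    by (rule K_lemma[OF hb])
  have T: "(x - b) * Phi n b x = pochhammer (x + 1) (Suc n) / pochhammer (b + 1) (Suc n) - 1"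
    by (rule Phi_tel[OF hb])
  have "1 - pochhammer (x + 1) (Suc n) / pochhammer (b + 1) (Suc n) = (b - x) * Phi n b x"
    using T by (simp add: algebra_simps)
  note h1 = this
  have "(b - x) * (\<Sum>j=0..n. ((x + of_nat n + 1) gchoose j) / ((of_nat n + b) gchoose j))
      = (b - x) * ((of_nat n + b + 1) * Phi n b x)" unfolding K h1 by (simp only: mult_ac)
  moreover have "b - x \<noteq> 0" using False by simp
  ultimately show ?thesis by simp
next
  case True
  have tm: "((b + of_nat n + 1) gchoose j) / ((of_nat n + b) gchoose j) = (of_nat n + b + 1) / (b + 1 + of_nat (n - j))"
    if "j \<le> n" for j
  proof -
    define y where "y = b + 1 + of_nat (n - j)"
    have y1: "b + of_nat n + 1 - of_nat j + 1 = y + 1" unfolding y_def using that by (simp add: of_nat_diff)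
    have y2: "of_nat n + b - of_nat j + 1 = y" unfolding y_def using that by (simp add: of_nat_diff)
    have yj: "y + of_nat j = of_nat n + b + 1" unfolding y_def using that by (simp add: of_nat_diff)
    have ynz: "y \<noteq> 0" unfolding y_def using b_nz[OF hb, of "n - j"] by (simp add: algebra_simps)
    have pnz: "pochhammer y j \<noteq> 0" unfolding y_def by (rule poch_nzt[OF hb])
    have rel: "y * pochhammer (y + 1) j = pochhammer y j * (y + of_nat j)"
      using pochhammer_rec[of y j] pochhammer_rec'[of y j] by (simp add: algebra_simps)
    have "((b + of_nat n + 1) gchoose j) / ((of_nat n + b) gchoose j) = pochhammer (y+1) j / pochhammer y j"
      unfolding gbinomial_pochhammer' y1 y2 by (simp add: field_simps)
    also have "\<dots> = (y + of_nat j) / y" using rel ynz pnz by (simp add: field_simps)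
    finally show ?thesis unfolding yj by (simp add: y_def)
  qed
  have "(\<Sum>j=0..n. ((x + of_nat n + 1) gchoose j) / ((of_nat n + b) gchoose j))
      = (\<Sum>j=0..n. (of_nat n + b + 1) / (b + 1 + of_nat (n - j)))"
    using tm True by (intro sum.cong) auto
  also have "\<dots> = (\<Sum>j=0..n. (of_nat n + b + 1) / (b + 1 + of_nat j))"
    by (subst sum.atLeastAtMost_rev) simp
  also have "\<dots> = (of_nat n + b + 1) * Phi n b x"
  proof -
    have "pochhammer (b + 1) r / pochhammer (b + 1) (Suc r) = 1 / (b + 1 + of_nat r)" for r
    proof -
      have P: "pochhammer (b + 1) r \<noteq> 0" by (rule poch_nz1[OF hb])
      have "b + 1 + of_nat r \<noteq> 0" using b_nz[OF hb, of r] by (simp add: algebra_simps)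
      then show ?thesis unfolding pochhammer_rec' using P by simp
    qed
    then show ?thesis unfolding Phi_def True by (simp add: sum_distrib_left)
  qed
  finally show ?thesis .
qed

lemma powi_inv: "(i::nat) \<le> r \<Longrightarrow> (c::complex) powi (int i - int r) = inverse c ^ (r - i)"
  by (simp add: power_int_def nat_diff_distrib)

lemma E_series:
  fixes x c :: complex
  assumes hc: "cmod (c + 1) > 1"
  shows "(\<lambda>k. ((x + of_nat k) gchoose r) * (1/(c+1))^k) sums
           ((c+1)/c * (\<Sum>i=0..r. (x gchoose i) * c powi (int i - int r)))"
proof -
  define z where "z = 1/(c+1)"
  have c1: "c + 1 \<noteq> 0" using hc by auto
  have c0: "c \<noteq> 0" using hc by auto
  have nz: "norm z < 1" unfolding z_def using hc by (simp add: norm_divide divide_less_eq)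
  have omz: "1 - z = c / (c+1)" unfolding z_def using c1 by (simp add: field_simps)
  have "(\<lambda>k. \<Sum>i=0..r. (x gchoose i) * (of_nat (k choose (r - i)) * z^k)) sums
          (\<Sum>i=0..r. (x gchoose i) * (z^(r-i) / (1 - z)^(Suc (r-i))))"
    by (intro sums_sum sums_mult binpow_sums nz)
  moreover have "(\<Sum>i=0..r. (x gchoose i) * (of_nat (k choose (r - i)) * z^k)) = ((x + of_nat k) gchoose r) * z^k" for k
  proof -
    have "((x + of_nat k) gchoose r) = (\<Sum>i=0..r. (x gchoose i) * (of_nat k gchoose (r - i)))"
      by (rule gbinomial_Vandermonde[symmetric])
    then show ?thesis by (simp add: sum_distrib_right binomial_gbinomial mult.assoc)
  qed
  moreover have "(\<Sum>i=0..r. (x gchoose i) * (z^(r-i) / (1 - z)^(Suc (r-i)))) =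
      (c+1)/c * (\<Sum>i=0..r. (x gchoose i) * c powi (int i - int r))"
  proof -
    have "z^(r-i) / (1 - z)^(Suc (r-i)) = (c+1)/c * inverse c ^ (r - i)" for i
      unfolding omz z_def using c1 c0 by (simp add: field_simps power_divide)
    then show ?thesis by (simp add: sum_distrib_left powi_inv mult_ac)
  qed
  ultimately show ?thesis unfolding z_def by simp
qed



lemma Phi_series:
  fixes a b c :: complex
  assumes hb: "\<forall>k::nat. b \<noteq> - of_nat (Suc k)" and hc: "cmod (c + 1) > 1"
  shows "(\<lambda>k. Phi n b (a + of_nat k) * (1/(c+1))^k) sums ((c+1)/c * dsum n a b c / (of_nat n + b + 1))"
proof -
  define z where "z = 1/(c+1)"
  define d where "d = of_nat n + b + 1"
  have dnz: "d \<noteq> 0" unfolding d_def using b_nz[OF hb, of n] by (simp add: algebra_simps)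
  have "(\<lambda>k. \<Sum>j=0..n. (1/((of_nat n + b) gchoose j)) * (((of_nat n + a + 1 + of_nat k) gchoose j) * z^k)) sums
     (\<Sum>j=0..n. (1/((of_nat n + b) gchoose j)) * ((c+1)/c * (\<Sum>i=0..j. ((of_nat n + a + 1) gchoose i) * c powi (int i - int j))))"
    unfolding z_def by (intro sums_sum sums_mult E_series hc)
  moreover have "(\<Sum>j=0..n. (1/((of_nat n + b) gchoose j)) * (((of_nat n + a + 1 + of_nat k) gchoose j) * z^k))
      = d * (Phi n b (a + of_nat k) * z^k)" for k
  proof -
    have e: "of_nat n + a + 1 + of_nat k = (a + of_nat k) + of_nat n + 1" by (simp add: algebra_simps)
    have "(\<Sum>j=0..n. (1/((of_nat n + b) gchoose j)) * (((of_nat n + a + 1 + of_nat k) gchoose j) * z^k))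
       = (\<Sum>j=0..n. (((a + of_nat k) + of_nat n + 1) gchoose j) / ((of_nat n + b) gchoose j)) * z^k"
      unfolding e by (simp add: sum_distrib_right)
    also have "\<dots> = d * (Phi n b (a + of_nat k) * z^k)" unfolding S_lemma[OF hb] d_def by simp
    finally show ?thesis .
  qed
  moreover have "(\<Sum>j=0..n. (1/((of_nat n + b) gchoose j)) * ((c+1)/c * (\<Sum>i=0..j. ((of_nat n + a + 1) gchoose i) * c powi (int i - int j))))
      = (c+1)/c * dsum n a b c"
    unfolding dsum_def by (simp add: sum_distrib_left mult_ac)
  ultimately have "(\<lambda>k. d * (Phi n b (a + of_nat k) * z^k)) sums ((c+1)/c * dsum n a b c)" by simp
  then have "(\<lambda>k. (1/d) * (d * (Phi n b (a + of_nat k) * z^k))) sums ((1/d) * ((c+1)/c * dsum n a b c))"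
    by (rule sums_mult)
  then show ?thesis using dnz unfolding z_def d_def by (simp add: ac_simps)
qed

lemma t2_summable:
  fixes u z :: complex
  assumes "norm z < 1"
  shows "summable (\<lambda>k. u / (u + of_nat k) * z^k)"
proof (rule summable_comparison_test_ev)
  show "summable (\<lambda>k. norm z ^ k)" using assms by (intro summable_geometric) simp
  obtain N :: nat where N: "real N \<ge> 2 * cmod u" using real_arch_simple by blast
  have "norm (u / (u + of_nat k) * z^k) \<le> norm z ^ k" if "k \<ge> N" for k
  proof (cases "u = 0")
    case True then show ?thesis by simp
  next
    case False
    have "real k = norm (of_nat k :: complex)" by simp
    also have "\<dots> = norm ((u + of_nat k) - u)" by simp
    also have "\<dots> \<le> norm (u + of_nat k) + norm u" by (rule norm_triangle_ineq4)
    finally have "real k \<le> norm (u + of_nat k) + norm u" .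
    moreover have "real k \<ge> 2 * cmod u" using N that by linarith
    ultimately have le: "norm u \<le> norm (u + of_nat k)" by linarith
    have pos: "norm (u + of_nat k) > 0" using le False by auto
    have "norm (u / (u + of_nat k)) \<le> 1" using le pos by (simp add: norm_divide divide_le_eq)
    then have "norm (u / (u + of_nat k)) * norm z ^ k \<le> 1 * norm z ^ k"
      by (intro mult_right_mono) auto
    then show ?thesis by (simp only: norm_mult norm_power mult_1_left)
  qed
  then show "eventually (\<lambda>k. norm (u / (u + of_nat k) * z^k) \<le> norm z ^ k) sequentially"
    unfolding eventually_sequentially by blast
qed

lemma alg2: fixes F P0 P1 E D Z :: complex
  assumes "F \<noteq> 0" "P1 \<noteq> 0" "E \<noteq> 0" "P0 * E = D * P1"
  shows "F * P0 / P1 * Z / F = D / E * Z"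
proof -
  have "P0 = D * P1 / E" using assms by (simp add: field_simps)
  then show ?thesis using assms by (simp add: field_simps)
qed

lemma alg3: fixes F P0 P1 E D Z Q R S T U :: complex
  assumes "F \<noteq> 0" "P1 \<noteq> 0" "E \<noteq> 0" "R \<noteq> 0" "T \<noteq> 0" "P0 * E = D * P1" "S * Q = R * U"
  shows "S / T * (F * P0 * Q / (P1 * R) * Z / F) = D / E * (U / T) * Z"
proof -
  have "P0 = D * P1 / E" using assms by (simp add: field_simps)
  moreover have "Q = R * U / S \<or> S = 0" using assms by (auto simp: field_simps)
  ultimately show ?thesis using assms by (auto simp: field_simps)
qed




lemma alg4: fixes E P X D :: complex assumes "E \<noteq> 0" "E * P = X" shows "D * P = D / E * X"
proof -
  have "P = X / E" using assms by (simp add: field_simps)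
  then show ?thesis by simp
qed

lemma part2:
  fixes n :: nat and a b c :: complex
  assumes hb: "\<forall>k::nat. b \<noteq> - of_nat (Suc k)" and hc: "cmod (c + 1) > 1"
    and hab: "\<forall>k::nat. a - b \<noteq> - of_nat k" and ha: "\<forall>k::nat. a \<noteq> - of_nat (Suc k)"
  shows "(a - b) * (c + 1) / ((of_nat n + b + 1) * c) * dsum n a b c =
      pochhammer (a + 1) (n + 1) / pochhammer (b + 1) (n + 1) *
        hyp3F2 1 (a - b) (of_nat n + a + 2) (a - b + 1) (a + 1) (1 / (c + 1))
      - hyp2F1 1 (a - b) (a - b + 1) (1 / (c + 1))"
proof -
  define z where "z = 1/(c+1)"
  define V where "V = (c+1)/c * dsum n a b c / (of_nat n + b + 1)"
  define A where "A = pochhammer (a + 1) (Suc n) / pochhammer (b + 1) (Suc n)"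
  define t2 where "t2 k = pochhammer 1 k * pochhammer (a - b) k / pochhammer (a - b + 1) k * z^k / fact k" for k
  define t3 where "t3 k = pochhammer 1 k * pochhammer (a - b) k * pochhammer (of_nat n + a + 2) k /
      (pochhammer (a - b + 1) k * pochhammer (a + 1) k) * z^k / fact k" for k
  have nz: "norm z < 1" unfolding z_def using hc by (simp add: norm_divide divide_less_eq)
  have PS: "(\<lambda>k. Phi n b (a + of_nat k) * z^k) sums V"
    unfolding z_def V_def by (rule Phi_series[OF hb hc])
  have Snz: "pochhammer (a + 1) (Suc n) \<noteq> 0" by (rule poch_nz1[OF ha])
  have Tnz: "pochhammer (b + 1) (Suc n) \<noteq> 0" by (rule poch_nz1[OF hb])
  have Anz: "A \<noteq> 0" unfolding A_def using Snz Tnz by simp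
  have Enz: "a - b + of_nat k \<noteq> 0" for k
  proof
    assume "a - b + of_nat k = 0"
    then have "a - b = - of_nat (k + 0)" using neg_shift[of "a - b" k 0] by simp
    with hab show False by simp
  qed
  have P1nz: "pochhammer (a - b + 1) k \<noteq> 0" for k
  proof
    assume "pochhammer (a - b + 1) k = 0"
    then obtain j where "a - b + 1 = - of_nat j" by (auto simp: pochhammer_eq_0_iff)
    then have "a - b = - of_nat (1 + j)" using neg_shift[of "a - b" 1 j] by simp
    with hab show False by blast
  qed
  have rel0: "pochhammer (a - b) k * (a - b + of_nat k) = (a - b) * pochhammer (a - b + 1) k" for k
    using pochhammer_rec[of "a - b" k] pochhammer_rec'[of "a - b" k] by (simp add: mult_ac)
  have t2eq: "t2 k = (a - b) / ((a - b) + of_nat k) * z^k" for k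
    unfolding t2_def pochhammer_fact[symmetric]
    by (rule alg2[OF fact_nonzero P1nz Enz rel0])
  have relSQ: "pochhammer (a + 1) (Suc n) * pochhammer (of_nat n + a + 2) k =
      pochhammer (a + 1) k * pochhammer (a + of_nat k + 1) (Suc n)" for k
  proof -
    have e3: "a + 1 + of_nat (Suc n) = of_nat n + a + 2" by (simp add: algebra_simps)
    have e4: "a + 1 + of_nat k = a + of_nat k + 1" by (simp add: algebra_simps)
    have e1: "pochhammer (a + 1) (Suc n + k) = pochhammer (a + 1) (Suc n) * pochhammer (of_nat n + a + 2) k"
      using pochhammer_product'[of "a + 1" "Suc n" k] unfolding e3 .
    have e2: "pochhammer (a + 1) (k + Suc n) = pochhammer (a + 1) k * pochhammer (a + of_nat k + 1) (Suc n)"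
      using pochhammer_product'[of "a + 1" k "Suc n"] unfolding e4 .
    show ?thesis using e1 e2 by (metis add.commute)
  qed
  have t3eq: "A * t3 k = (a - b) / (a - b + of_nat k) *
      (pochhammer (a + of_nat k + 1) (Suc n) / pochhammer (b + 1) (Suc n)) * z^k" for k
    unfolding A_def t3_def pochhammer_fact[symmetric]
    by (rule alg3[OF fact_nonzero P1nz Enz poch_nz1[OF ha] Tnz rel0 relSQ])
  have tel: "(a - b) * Phi n b (a + of_nat k) = (a - b) / (a - b + of_nat k) *
      (pochhammer (a + of_nat k + 1) (Suc n) / pochhammer (b + 1) (Suc n) - 1)" for k
  proof -
    have "(a + of_nat k - b) * Phi n b (a + of_nat k) = pochhammer (a + of_nat k + 1) (Suc n) / pochhammer (b + 1) (Suc n) - 1"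
      by (rule Phi_tel[OF hb])
    moreover have "a + of_nat k - b = a - b + of_nat k" by simp
    ultimately have "(a - b + of_nat k) * Phi n b (a + of_nat k) = pochhammer (a + of_nat k + 1) (Suc n) / pochhammer (b + 1) (Suc n) - 1"
      by simp
    then show ?thesis by (rule alg4[OF Enz[of k]])
  qed
  have key: "A * t3 k = (a - b) * (Phi n b (a + of_nat k) * z^k) + t2 k" for k
    unfolding t3eq t2eq mult.assoc[symmetric] tel by (simp add: algebra_simps)
  have s2: "summable t2" unfolding t2eq[abs_def] by (rule t2_summable[OF nz])
  then have s2': "t2 sums (suminf t2)" by (rule summable_sums)
  have "(\<lambda>k. (a - b) * (Phi n b (a + of_nat k) * z^k) + t2 k) sums ((a - b) * V + suminf t2)"
    by (intro sums_add sums_mult PS s2')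
  then have "(\<lambda>k. A * t3 k) sums ((a - b) * V + suminf t2)" unfolding key .
  then have "(\<lambda>k. (1/A) * (A * t3 k)) sums ((1/A) * ((a - b) * V + suminf t2))" by (rule sums_mult)
  then have s3: "t3 sums (((a - b) * V + suminf t2) / A)" using Anz by simp
  have H3: "hyp3F2 1 (a - b) (of_nat n + a + 2) (a - b + 1) (a + 1) (1 / (c + 1)) = ((a - b) * V + suminf t2) / A"
    unfolding hyp3F2_def z_def[symmetric] t3_def[symmetric] using s3 by (rule sums_unique[symmetric])
  have H2: "hyp2F1 1 (a - b) (a - b + 1) (1 / (c + 1)) = suminf t2"
    unfolding hyp2F1_def z_def[symmetric] t2_def[symmetric] by (rule refl)
  have L: "(a - b) * (c + 1) / ((of_nat n + b + 1) * c) * dsum n a b c = (a - b) * V"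
    unfolding V_def by (simp add: divide_inverse mult_ac)
  show ?thesis unfolding L H3 H2 A_def[symmetric] Suc_eq_plus1[symmetric] using Anz by simp
qed




lemma Dig_sum:
  fixes b :: complex
  assumes hb: "\<forall>k::nat. b \<noteq> - of_nat (Suc k)"
  shows "Digamma (b + 1 + of_nat (Suc n)) - Digamma (b + 1) = (\<Sum>r=0..n. 1 / (b + 1 + of_nat r))"
proof (induction n)
  case 0
  have "b + 1 \<noteq> 0" using b_nz[OF hb, of 0] by simp
  then show ?case using Digamma_plus1[of "b+1"] by simp
next
  case (Suc n)
  have nz: "b + 1 + of_nat (Suc n) \<noteq> 0" using b_nz[OF hb, of "Suc n"] by (simp add: algebra_simps)
  have "Digamma (b + 1 + of_nat (Suc (Suc n))) = Digamma ((b + 1 + of_nat (Suc n)) + 1)" by (simp add: algebra_simps)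
  also have "\<dots> = Digamma (b + 1 + of_nat (Suc n)) + 1 / (b + 1 + of_nat (Suc n))" by (rule Digamma_plus1[OF nz])
  finally show ?case using Suc.IH by (simp add: algebra_simps)
qed

lemma Phi_b:
  fixes b :: complex
  assumes hb: "\<forall>k::nat. b \<noteq> - of_nat (Suc k)"
  shows "Phi n b b = (\<Sum>r=0..n. 1 / (b + 1 + of_nat r))"
proof -
  have "pochhammer (b + 1) r / pochhammer (b + 1) (Suc r) = 1 / (b + 1 + of_nat r)" for r
  proof -
    have P: "pochhammer (b + 1) r \<noteq> 0" by (rule poch_nz1[OF hb])
    have "b + 1 + of_nat r \<noteq> 0" using b_nz[OF hb, of r] by (simp add: algebra_simps)
    then show ?thesis unfolding pochhammer_rec' using P by simp
  qed
  then show ?thesis unfolding Phi_def by simp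
qed

lemma alg5: fixes F K B1 P C T1 M Q U1 :: complex
  assumes "F \<noteq> 0" "K \<noteq> 0" "B1 \<noteq> 0" "P \<noteq> 0" "C \<noteq> 0" "T1 \<noteq> 0" "T1 * (M * Q) = (B1 * P) * U1"
  shows "M / (B1 * C) * (F * F * Q / ((K * F) * P) * (1 / C)^k / F) = U1 / T1 / K * (1 / C)^(Suc k)"
proof -
  have "U1 = T1 * (M * Q) / (B1 * P)" using assms by (simp add: field_simps)
  then show ?thesis using assms by (simp add: field_simps)
qed

lemma Phi_shift:
  fixes b :: complex
  assumes hb: "\<forall>k::nat. b \<noteq> - of_nat (Suc k)" and "l \<noteq> 0"
  shows "Phi n b (b + of_nat l) = (pochhammer (b + of_nat l + 1) (Suc n) / pochhammer (b + 1) (Suc n) - 1) / of_nat l"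
proof -
  have "(b + of_nat l - b) * Phi n b (b + of_nat l) = pochhammer (b + of_nat l + 1) (Suc n) / pochhammer (b + 1) (Suc n) - 1"
    by (rule Phi_tel[OF hb])
  then have "of_nat l * Phi n b (b + of_nat l) = pochhammer (b + of_nat l + 1) (Suc n) / pochhammer (b + 1) (Suc n) - 1"
    by simp
  then show ?thesis using assms(2) by (simp add: field_simps)
qed

lemma Phi_shift_neg:
  fixes b :: complex
  assumes hb: "\<forall>k::nat. b \<noteq> - of_nat (Suc k)" and "l \<noteq> 0"
  shows "Phi n b (b - of_nat l) = - ((pochhammer (b + 1 - of_nat l) (Suc n) / pochhammer (b + 1) (Suc n) - 1) / of_nat l)"
proof -
  have "(b - of_nat l - b) * Phi n b (b - of_nat l) = pochhammer (b - of_nat l + 1) (Suc n) / pochhammer (b + 1) (Suc n) - 1"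
    by (rule Phi_tel[OF hb])
  then have "- (of_nat l * Phi n b (b - of_nat l)) = pochhammer (b + 1 - of_nat l) (Suc n) / pochhammer (b + 1) (Suc n) - 1"
    by (simp add: algebra_simps)
  then show ?thesis using assms(2) by (simp add: field_simps)
qed




lemma part3:
  fixes n m :: nat and b c :: complex
  assumes hb: "\<forall>k::nat. b \<noteq> - of_nat (Suc k)" and hc: "cmod (c + 1) > 1"
  shows "(c + 1) ^ (m + 1) / ((of_nat n + b + 1) * c) * dsum n (b - of_nat m) b c =
      (of_nat n + b + 2) / ((b + 1) * (c + 1)) *
        hyp3F2 1 1 (of_nat n + b + 3) 2 (b + 2) (1 / (c + 1))
      + Digamma (of_nat n + b + 2) - Digamma (b + 1) + Ln (c / (c + 1))
      - (\<Sum>l=1..m. (c + 1) ^ l / of_nat l *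
           (pochhammer (b + 1 - of_nat l) (n + 1) / pochhammer (b + 1) (n + 1) - 1))"
proof -
  define z where "z = 1/(c+1)"
  define C where "C = c + 1"
  define a where "a = b - of_nat m"
  define V where "V = (c+1)/c * dsum n a b c / (of_nat n + b + 1)"
  define f where "f k = Phi n b (a + of_nat k) * z^k" for k
  define P0 where "P0 = (\<Sum>k<Suc m. f k)"
  define B where "B = (of_nat n + b + 2) / ((b + 1) * (c + 1))"
  define h3 where "h3 k = pochhammer 1 k * pochhammer 1 k * pochhammer (of_nat n + b + 3) k /
      (pochhammer 2 k * pochhammer (b + 2) k) * z^k / fact k" for k
  define h where "h k = (pochhammer (b + of_nat (Suc k) + 1) (Suc n) / pochhammer (b + 1) (Suc n)) / of_nat (Suc k) * z^(Suc k)" for k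
  define ell where "ell k = - (z^(Suc k)) / of_nat (Suc k)" for k
  have Cnz: "C \<noteq> 0" unfolding C_def using hc by auto
  have c0: "c \<noteq> 0" using hc by auto
  have nz: "norm z < 1" unfolding z_def using hc by (simp add: norm_divide divide_less_eq)
  have zC: "z = 1 / C" unfolding z_def C_def by simp
  have PS: "f sums V" unfolding f_def z_def V_def by (rule Phi_series[OF hb hc])
  have T1: "(\<lambda>k. f (k + Suc m)) sums (V - P0)" unfolding P0_def by (rule sums_split_initial_segment[OF PS])
  have T2: "(\<lambda>k. C^m * f (k + Suc m)) sums (C^m * (V - P0))" by (rule sums_mult[OF T1])
  have g_eq: "C^m * f (k + Suc m) = h k + ell k" for k
  proof -
    have e: "a + of_nat (k + Suc m) = b + of_nat (Suc k)" unfolding a_def by simp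
    have zz: "C^m * z^(k + Suc m) = z^(Suc k)" unfolding zC using Cnz
      by (simp add: power_add power_divide field_simps)
    have "C^m * f (k + Suc m) = Phi n b (b + of_nat (Suc k)) * z^(Suc k)"
      unfolding f_def e by (metis zz mult.left_commute)
    also have "\<dots> = h k + ell k"
    proof -
      define K where "K = (of_nat (Suc k) :: complex)"
      define R where "R = pochhammer (b + K + 1) (Suc n) / pochhammer (b + 1) (Suc n)"
      define Z where "Z = z^(Suc k)"
      have ps: "Phi n b (b + K) = (R - 1) / K" unfolding R_def K_def by (rule Phi_shift[OF hb]) simp
      have "(R - 1) / K * Z = R / K * Z + (- Z) / K" by (simp add: diff_divide_distrib algebra_simps)
      then show ?thesis unfolding h_def ell_def K_def[symmetric] Z_def[symmetric] R_def[symmetric] ps Z_def[symmetric] .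
    qed
    finally show ?thesis .
  qed
  have LN: "ell sums Ln (c / (c + 1))"
  proof -
    have nz': "cmod (- z) < 1" using nz by simp
    have "(\<lambda>k. - ((- (- z))^k) / of_nat k) sums ln (1 + - z)" by (rule Ln_series'[OF nz'])
    then have "(\<lambda>k. - (z^k) / of_nat k) sums ln (1 - z)" by simp
    moreover have "1 - z = c / (c + 1)" unfolding z_def using Cnz unfolding C_def by (simp add: field_simps)
    ultimately have "(\<lambda>k. - (z^k) / of_nat k) sums Ln (c / (c + 1))" by simp
    then have "(\<lambda>k. - (z^(k + 1)) / of_nat (k + 1)) sums Ln (c / (c + 1))"
      by (subst sums_zero_iff_shift[where f="\<lambda>k. - (z^k) / of_nat k"]) auto
    then show ?thesis unfolding ell_def by simp
  qed
  have Hs: "h sums (C^m * (V - P0) - Ln (c / (c + 1)))"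
  proof -
    have "(\<lambda>k. C^m * f (k + Suc m) - ell k) sums (C^m * (V - P0) - Ln (c / (c + 1)))"
      by (rule sums_diff[OF T2 LN])
    then show ?thesis unfolding g_eq by simp
  qed
  have Bh: "B * h3 k = h k" for k
  proof -
    have F1: "pochhammer 1 k = (fact k :: complex)" by (simp add: pochhammer_fact)
    have F2: "pochhammer 2 k = of_nat (Suc k) * (fact k :: complex)"
    proof -
      have "fact (Suc k) = pochhammer (1::complex) (Suc k)" by (rule pochhammer_fact)
      also have "\<dots> = pochhammer 2 k" by (simp add: pochhammer_rec)
      finally show ?thesis by simp
    qed
    have rel: "pochhammer (b + 1) (Suc n) * ((of_nat n + b + 2) * pochhammer (of_nat n + b + 3) k)
        = ((b + 1) * pochhammer (b + 2) k) * pochhammer (b + of_nat (Suc k) + 1) (Suc n)"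
    proof -
      have r1: "(of_nat n + b + 2) * pochhammer (of_nat n + b + 3) k = pochhammer (b + 1 + of_nat (Suc n)) (Suc k)"
        using pochhammer_rec[of "b + 1 + of_nat (Suc n)" k] by (simp add: algebra_simps numeral_3_eq_3 numeral_2_eq_2)
      have r2: "(b + 1) * pochhammer (b + 2) k = pochhammer (b + 1) (Suc k)"
        using pochhammer_rec[of "b + 1" k] by (simp add: algebra_simps numeral_2_eq_2)
      have r3: "b + of_nat (Suc k) + 1 = b + 1 + of_nat (Suc k)" by simp
      have "pochhammer (b + 1) (Suc n + Suc k) = pochhammer (b + 1) (Suc n) * pochhammer (b + 1 + of_nat (Suc n)) (Suc k)"
        by (rule pochhammer_product')
      moreover have "pochhammer (b + 1) (Suc k + Suc n) = pochhammer (b + 1) (Suc k) * pochhammer (b + 1 + of_nat (Suc k)) (Suc n)"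
        by (rule pochhammer_product')
      ultimately show ?thesis unfolding r1 r2 r3 by (metis add.commute)
    qed
    have b1: "b + 1 \<noteq> 0" using b_nz[OF hb, of 0] by simp
    have P2: "pochhammer (b + 2) k \<noteq> 0" using poch_nz1[OF hyp_shift[OF hb], of k] by (simp add: add.assoc)
    have T: "pochhammer (b + 1) (Suc n) \<noteq> 0" by (rule poch_nz1[OF hb])
    have K: "of_nat (Suc k) \<noteq> (0::complex)" by (rule of_nat_neq_0)
    have "B * h3 k = (of_nat n + b + 2) / ((b + 1) * C) * (fact k * fact k * pochhammer (of_nat n + b + 3) k /
        ((of_nat (Suc k) * fact k) * pochhammer (b + 2) k) * (1 / C)^k / fact k)"
      unfolding B_def h3_def F1 F2 C_def[symmetric] zC by simp
    also have "\<dots> = pochhammer (b + of_nat (Suc k) + 1) (Suc n) / pochhammer (b + 1) (Suc n) / of_nat (Suc k) * (1/C)^(Suc k)"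
      by (rule alg5[OF fact_nonzero K b1 P2 Cnz T rel])
    finally show ?thesis unfolding h_def zC .
  qed
  have Bnz: "B \<noteq> 0"
  proof -
    have x1: "b + 1 \<noteq> 0" using b_nz[OF hb, of 0] by simp
    have x2: "of_nat n + b + 2 \<noteq> 0" using b_nz[OF hb, of "Suc n"] by (simp add: algebra_simps)
    have x3: "c + 1 \<noteq> 0" using Cnz C_def by simp
    show ?thesis unfolding B_def using x1 x2 x3 by simp
  qed
  have "(\<lambda>k. (1/B) * (B * h3 k)) sums ((1/B) * (C^m * (V - P0) - Ln (c / (c + 1))))"
    unfolding Bh by (rule sums_mult[OF Hs])
  then have "h3 sums ((C^m * (V - P0) - Ln (c / (c + 1))) / B)" using Bnz by simp
  then have H3: "hyp3F2 1 1 (of_nat n + b + 3) 2 (b + 2) (1 / (c + 1)) = (C^m * (V - P0) - Ln (c / (c + 1))) / B"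
    unfolding hyp3F2_def z_def[symmetric] h3_def[symmetric] by (rule sums_unique[symmetric])
  have HD: "Digamma (of_nat n + b + 2) - Digamma (b + 1) = Phi n b b"
    unfolding Phi_b[OF hb] Dig_sum[OF hb, symmetric] by (simp add: algebra_simps)
  have P0eq: "C^m * P0 = Phi n b b - (\<Sum>l=1..m. (c + 1) ^ l / of_nat l *
           (pochhammer (b + 1 - of_nat l) (Suc n) / pochhammer (b + 1) (Suc n) - 1))"
  proof -
    define G where "G l = C^l * Phi n b (b - of_nat l)" for l
    have "C^m * P0 = (\<Sum>k<m. C^m * f k) + C^m * f m" unfolding P0_def by (simp add: sum_distrib_left distrib_left)
    moreover have "C^m * f m = Phi n b b"
      unfolding f_def a_def zC using Cnz by (simp add: power_divide)
    moreover have "(\<Sum>k<m. C^m * f k) = (\<Sum>k<m. G (m - k))"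
    proof (rule sum.cong[OF refl])
      fix k assume "k \<in> {..<m}"
      then have km: "k < m" by simp
      have e: "a + of_nat k = b - of_nat (m - k)" unfolding a_def using km by (simp add: of_nat_diff)
      have "C^m = C^(m - k) * C^k" using km by (simp flip: power_add)
      then show "C^m * f k = G (m - k)" unfolding f_def G_def e zC using Cnz by (simp add: power_divide)
    qed
    moreover have "(\<Sum>k<m. G (m - k)) = (\<Sum>i<m. G (Suc i))"
    proof -
      have "(\<Sum>k<m. G (m - k)) = (\<Sum>i<m. G (m - (m - Suc i)))"
        by (rule sum.nat_diff_reindex[symmetric, where g="\<lambda>k. G (m - k)"])
      also have "\<dots> = (\<Sum>i<m. G (Suc i))" by (intro sum.cong) auto
      finally show ?thesis .
    qed
    moreover have "(\<Sum>i<m. G (Suc i)) = (\<Sum>l=1..m. G l)" by (simp add: sum.atLeast1_atMost_eq)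
    moreover have "G l = - ((c + 1) ^ l / of_nat l *
           (pochhammer (b + 1 - of_nat l) (Suc n) / pochhammer (b + 1) (Suc n) - 1))" if "l \<in> {1..m}" for l
    proof -
      have "l \<noteq> 0" using that by simp
      then show ?thesis unfolding G_def Phi_shift_neg[OF hb \<open>l \<noteq> 0\<close>] C_def by (simp add: field_simps)
    qed
    then have "(\<Sum>l=1..m. G l) = - (\<Sum>l=1..m. (c + 1) ^ l / of_nat l *
           (pochhammer (b + 1 - of_nat l) (Suc n) / pochhammer (b + 1) (Suc n) - 1))"
      by (simp add: sum_negf)
    ultimately show ?thesis by simp
  qed
  have L: "(c + 1) ^ (m + 1) / ((of_nat n + b + 1) * c) * dsum n (b - of_nat m) b c = C^m * V"
    unfolding V_def a_def C_def by (simp add: divide_inverse mult_ac)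
  note P0eq' = P0eq[unfolded Suc_eq_plus1]
  have HD': "Digamma (of_nat n + b + 2) = Digamma (b + 1) + Phi n b b" using HD by (simp add: algebra_simps)
  have e1: "B * ((C^m * (V - P0) - Ln (c / (c + 1))) / B) = C^m * V - C^m * P0 - Ln (c / (c + 1))"
  proof -
    have "B * ((C^m * (V - P0) - Ln (c / (c + 1))) / B) = C^m * (V - P0) - Ln (c / (c + 1))"
      by (metis Bnz nonzero_mult_div_cancel_left times_divide_eq_right)
    then show ?thesis by (simp add: right_diff_distrib)
  qed
  have fin: "C^m * V = B * ((C^m * (V - P0) - Ln (c / (c + 1))) / B)
      + Digamma (of_nat n + b + 2) - Digamma (b + 1) + Ln (c / (c + 1))
      - (\<Sum>l=1..m. (c + 1) ^ l / of_nat l *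
           (pochhammer (b + 1 - of_nat l) (n + 1) / pochhammer (b + 1) (n + 1) - 1))"
    unfolding e1 HD' P0eq' by (simp add: algebra_simps)
  show ?thesis unfolding L H3 B_def[symmetric] by (rule fin)
qed




definition RHS1 :: "nat \<Rightarrow> complex \<Rightarrow> complex \<Rightarrow> complex \<Rightarrow> complex" where
  "RHS1 n a b c = (1 / (b + 1)) * (\<Sum>k=0..n. \<Sum>j=0..k.
          ((of_nat k + a) gchoose j) / ((of_nat k + b + 1) gchoose k) * c powi (int j - int k))"

lemma part1_region:
  fixes n :: nat and a b c :: complex
  assumes hb: "\<forall>k::nat. b \<noteq> - of_nat (Suc k)" and hc: "cmod (c + 1) > 1"
  shows "dsum n a b c / (of_nat n + b + 1) = RHS1 n a b c"
proof -
  define z where "z = 1/(c+1)"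
  have c0: "c \<noteq> 0" using hc by auto
  have c1: "c + 1 \<noteq> 0" using hc by auto
  have PS: "(\<lambda>k. Phi n b (a + of_nat k) * z^k) sums ((c+1)/c * dsum n a b c / (of_nat n + b + 1))"
    unfolding z_def by (rule Phi_series[OF hb hc])
  have "(\<lambda>t. \<Sum>r=0..n. ((1/(b+1)) / ((of_nat r + b + 1) gchoose r)) * (((of_nat r + a + of_nat t) gchoose r) * z^t)) sums
      (\<Sum>r=0..n. ((1/(b+1)) / ((of_nat r + b + 1) gchoose r)) * ((c+1)/c * (\<Sum>j=0..r. ((of_nat r + a) gchoose j) * c powi (int j - int r))))"
    unfolding z_def by (intro sums_sum sums_mult E_series hc)
  moreover have "(\<Sum>r=0..n. ((1/(b+1)) / ((of_nat r + b + 1) gchoose r)) * (((of_nat r + a + of_nat t) gchoose r) * z^t))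
      = Phi n b (a + of_nat t) * z^t" for t
  proof -
    have "((1/(b+1)) / ((of_nat r + b + 1) gchoose r)) * ((of_nat r + a + of_nat t) gchoose r)
        = pochhammer (a + of_nat t + 1) r / pochhammer (b + 1) (Suc r)" for r
    proof -
      have g1: "(of_nat r + a + of_nat t) gchoose r = pochhammer (a + of_nat t + 1) r / fact r"
        by (simp add: gbinomial_pochhammer' algebra_simps)
      have g2: "(of_nat r + b + 1) gchoose r = pochhammer (b + 2) r / fact r"
        by (simp add: gbinomial_pochhammer' algebra_simps)
      have p: "pochhammer (b + 1) (Suc r) = (b + 1) * pochhammer (b + 2) r"
        using pochhammer_rec[of "b+1" r] by (simp add: algebra_simps numeral_2_eq_2)
      have P2: "pochhammer (b + 2) r \<noteq> 0" using poch_nz1[OF hyp_shift[OF hb], of r] by (simp add: add.assoc)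
      have b1: "b + 1 \<noteq> 0" using b_nz[OF hb, of 0] by simp
      have f: "fact r \<noteq> (0::complex)" by (rule fact_nonzero)
      show ?thesis unfolding g1 g2 p using P2 b1 f by (simp add: field_simps)
    qed
    then show ?thesis unfolding Phi_def by (simp add: sum_distrib_right mult.assoc[symmetric])
  qed
  moreover have "(\<Sum>r=0..n. ((1/(b+1)) / ((of_nat r + b + 1) gchoose r)) * ((c+1)/c * (\<Sum>j=0..r. ((of_nat r + a) gchoose j) * c powi (int j - int r))))
     = (c+1)/c * RHS1 n a b c"
    unfolding RHS1_def by (simp add: sum_distrib_left mult_ac)
  ultimately have "(\<lambda>k. Phi n b (a + of_nat k) * z^k) sums ((c+1)/c * RHS1 n a b c)" by simp
  with PS have "(c+1)/c * dsum n a b c / (of_nat n + b + 1) = (c+1)/c * RHS1 n a b c" by (rule sums_unique2)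
  then have "(c+1)/c * (dsum n a b c / (of_nat n + b + 1)) = (c+1)/c * RHS1 n a b c"
    by (simp only: times_divide_eq_right)
  moreover have "(c+1)/c \<noteq> 0" using c0 c1 by simp
  ultimately show ?thesis by (metis mult_cancel_left)
qed




lemma pow_powi: "(c::complex) \<noteq> 0 \<Longrightarrow> i \<le> j \<Longrightarrow> j \<le> n \<Longrightarrow> c^(n + i - j) = c^n * c powi (int i - int j)"
proof -
  assume c: "c \<noteq> 0" and ij: "i \<le> j" and jn: "j \<le> n"
  have "c powi (int i - int j) = inverse c ^ (j - i)" using powi_inv[OF ij] .
  moreover have "c^n = c^(n + i - j) * c^(j - i)" using ij jn by (simp flip: power_add)
  ultimately show ?thesis using c by (simp add: power_inverse field_simps)
qed

lemma part1:
  fixes n :: nat and a b c :: complex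
  assumes hb: "\<forall>k::nat. b \<noteq> - of_nat (Suc k)" and c0: "c \<noteq> 0"
  shows "dsum n a b c / (of_nat n + b + 1) = RHS1 n a b c"
proof -
  define pL where "pL = (\<Sum>j=0..n. \<Sum>i=0..j. monom (((of_nat n + a + 1) gchoose i) / ((of_nat n + b) gchoose j) / (of_nat n + b + 1)) (n + i - j))"
  define pR where "pR = (\<Sum>k=0..n. \<Sum>j=0..k. monom ((1 / (b + 1)) * (((of_nat k + a) gchoose j) / ((of_nat k + b + 1) gchoose k))) (n + j - k))"
  have evL: "poly pL x = x^n * (dsum n a b x / (of_nat n + b + 1))" if x0: "x \<noteq> 0" for x
  proof -
    have "poly pL x = (\<Sum>j=0..n. \<Sum>i=0..j. ((of_nat n + a + 1) gchoose i) / ((of_nat n + b) gchoose j) / (of_nat n + b + 1) * x^(n + i - j))"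
      unfolding pL_def by (simp add: poly_sum poly_monom)
    also have "\<dots> = (\<Sum>j=0..n. \<Sum>i=0..j. x^n * (((of_nat n + a + 1) gchoose i) / ((of_nat n + b) gchoose j) * x powi (int i - int j) / (of_nat n + b + 1)))"
    proof (intro sum.cong refl)
      fix j i assume j: "j \<in> {0..n}" and i: "i \<in> {0..j}"
      show "((of_nat n + a + 1) gchoose i) / ((of_nat n + b) gchoose j) / (of_nat n + b + 1) * x^(n + i - j)
          = x^n * (((of_nat n + a + 1) gchoose i) / ((of_nat n + b) gchoose j) * x powi (int i - int j) / (of_nat n + b + 1))"
        using pow_powi[OF x0, of i j n] i j by (simp add: mult_ac)
    qed
    also have "\<dots> = x^n * (dsum n a b x / (of_nat n + b + 1))"
      unfolding dsum_def by (simp add: sum_distrib_left sum_divide_distrib)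
    finally show ?thesis .
  qed
  have evR: "poly pR x = x^n * RHS1 n a b x" if x0: "x \<noteq> 0" for x
  proof -
    have "poly pR x = (\<Sum>k=0..n. \<Sum>j=0..k. (1 / (b + 1)) * (((of_nat k + a) gchoose j) / ((of_nat k + b + 1) gchoose k)) * x^(n + j - k))"
      unfolding pR_def by (simp add: poly_sum poly_monom)
    also have "\<dots> = (\<Sum>k=0..n. \<Sum>j=0..k. x^n * ((1 / (b + 1)) * (((of_nat k + a) gchoose j) / ((of_nat k + b + 1) gchoose k) * x powi (int j - int k))))"
    proof (intro sum.cong refl)
      fix k j assume k: "k \<in> {0..n}" and j: "j \<in> {0..k}"
      show "(1 / (b + 1)) * (((of_nat k + a) gchoose j) / ((of_nat k + b + 1) gchoose k)) * x^(n + j - k)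
          = x^n * ((1 / (b + 1)) * (((of_nat k + a) gchoose j) / ((of_nat k + b + 1) gchoose k) * x powi (int j - int k)))"
        using pow_powi[OF x0, of j k n] j k by (simp add: mult_ac)
    qed
    also have "\<dots> = x^n * RHS1 n a b x"
      unfolding RHS1_def by (simp add: sum_distrib_left)
    finally show ?thesis .
  qed
  have zero: "poly (pL - pR) (of_nat (Suc k)) = 0" for k
  proof -
    define x where "x = (of_nat (Suc k) :: complex)"
    have x0: "x \<noteq> 0" unfolding x_def by (rule of_nat_neq_0)
    have "cmod (x + 1) = real (Suc k) + 1" unfolding x_def
      by (metis norm_of_nat of_nat_1 of_nat_add of_nat_Suc)
    then have hx: "cmod (x + 1) > 1" by simp
    have "poly pL x = poly pR x" unfolding evL[OF x0] evR[OF x0] part1_region[OF hb hx] ..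
    then show ?thesis unfolding x_def[symmetric] by simp
  qed
  have "pL - pR = 0"
  proof (rule ccontr)
    assume "pL - pR \<noteq> 0"
    then have fin: "finite {x. poly (pL - pR) x = 0}" by (rule poly_roots_finite)
    have "range (\<lambda>k. of_nat (Suc k) :: complex) \<subseteq> {x. poly (pL - pR) x = 0}" using zero by auto
    moreover have "infinite (range (\<lambda>k. of_nat (Suc k) :: complex))"
      by (rule range_inj_infinite) (simp add: inj_def)
    ultimately show False using fin finite_subset by blast
  qed
  then have "pL = pR" by simp
  then have "c^n * (dsum n a b c / (of_nat n + b + 1)) = c^n * RHS1 n a b c"
    using evL[OF c0] evR[OF c0] by simp
  moreover have "c^n \<noteq> 0" using c0 by simp
  ultimately show ?thesis by (metis mult_cancel_left)
qed



theorem theorem2: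
  fixes n :: nat and a b c :: complex
  assumes b_notneg: "\<forall>k::nat. b \<noteq> - of_nat (Suc k)"
  shows
  "(c \<noteq> 0 \<longrightarrow>
      dsum n a b c / (of_nat n + b + 1) =
      (1 / (b + 1)) * (\<Sum>k=0..n. \<Sum>j=0..k.
          ((of_nat k + a) gchoose j) / ((of_nat k + b + 1) gchoose k) * c powi (int j - int k)))
   \<and>
   ((cmod (c + 1) > 1 \<and> (\<forall>k::nat. a - b \<noteq> - of_nat k) \<and> (\<forall>k::nat. a \<noteq> - of_nat (Suc k))) \<longrightarrow>
      (a - b) * (c + 1) / ((of_nat n + b + 1) * c) * dsum n a b c =
      pochhammer (a + 1) (n + 1) / pochhammer (b + 1) (n + 1) *
        hyp3F2 1 (a - b) (of_nat n + a + 2) (a - b + 1) (a + 1) (1 / (c + 1))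
      - hyp2F1 1 (a - b) (a - b + 1) (1 / (c + 1)))
   \<and>
   (\<forall>m::nat. (cmod (c + 1) > 1 \<and> a = b - of_nat m) \<longrightarrow>
      (c + 1) ^ (m + 1) / ((of_nat n + b + 1) * c) * dsum n a b c =
      (of_nat n + b + 2) / ((b + 1) * (c + 1)) *
        hyp3F2 1 1 (of_nat n + b + 3) 2 (b + 2) (1 / (c + 1))
      + Digamma (of_nat n + b + 2) - Digamma (b + 1) + Ln (c / (c + 1))
      - (\<Sum>l=1..m. (c + 1) ^ l / of_nat l *
           (pochhammer (b + 1 - of_nat l) (n + 1) / pochhammer (b + 1) (n + 1) - 1)))"
  proof (intro conjI impI allI)
  assume "c \<noteq> 0"
  from part1[OF b_notneg this] show "dsum n a b c / (of_nat n + b + 1) =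
      (1 / (b + 1)) * (\<Sum>k=0..n. \<Sum>j=0..k.
          ((of_nat k + a) gchoose j) / ((of_nat k + b + 1) gchoose k) * c powi (int j - int k))"
    unfolding RHS1_def .
next
  assume h: "cmod (c + 1) > 1 \<and> (\<forall>k::nat. a - b \<noteq> - of_nat k) \<and> (\<forall>k::nat. a \<noteq> - of_nat (Suc k))"
  then show "(a - b) * (c + 1) / ((of_nat n + b + 1) * c) * dsum n a b c =
      pochhammer (a + 1) (n + 1) / pochhammer (b + 1) (n + 1) *
        hyp3F2 1 (a - b) (of_nat n + a + 2) (a - b + 1) (a + 1) (1 / (c + 1))
      - hyp2F1 1 (a - b) (a - b + 1) (1 / (c + 1))"
    using part2[OF b_notneg] by blast
next
  fix m :: nat
  assume h: "cmod (c + 1) > 1 \<and> a = b - of_nat m"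
  show "(c + 1) ^ (m + 1) / ((of_nat n + b + 1) * c) * dsum n a b c =
      (of_nat n + b + 2) / ((b + 1) * (c + 1)) *
        hyp3F2 1 1 (of_nat n + b + 3) 2 (b + 2) (1 / (c + 1))
      + Digamma (of_nat n + b + 2) - Digamma (b + 1) + Ln (c / (c + 1))
      - (\<Sum>l=1..m. (c + 1) ^ l / of_nat l *
           (pochhammer (b + 1 - of_nat l) (n + 1) / pochhammer (b + 1) (n + 1) - 1))"
    unfolding conjunct2[OF h] by (rule part3[OF b_notneg conjunct1[OF h]])
qed

end
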